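(* Consider a GND instance, a reply $\varrho$-oracle ($\varrho\ge1$), and a cost sharing mechanism $M$ whose induced GND game admits an $(A,B)$-bounded potential function and is $(\lambda,\mu)$-smooth with $\mu<1/(\varrho\epsilon_1^2)$, where $\epsilon_1=\frac{1+\epsilon}{1-\epsilon}$. Let $Q=\frac{2\epsilon_1NA}{1-\varrho\epsilon_1^2\mu}$, $T=\lceil Q\ln(ABN^{\max_j\alpha_j})\rceil$ and $T'=N\cdot T^2$. Run the randomized-selection variant of Alg-ABRD for $T'$ steps. Then with probability at least $1/2$ its output $p^{t^*}$ satisfies $$C(p^{t^*})\le\frac{2\varrho\epsilon_1^2\lambda}{1-\varrho\epsilon_1^2\mu}\cdot C^*.$$
   Context: GND instance: finite resource set $E$; requests $i \in [N]$, each with a reply collection $P_i \subseteq 2^E$ and a weight vector $w_i \in \mathbb{Z}_{\geq 1}^E$; constants $q \in \mathbb{Z}_{\ge 1}$, $\alpha_1,\dots,\alpha_q > 1$; for each $e$, $\sigma_e \geq 0$ and $\xi_{e,j} \geq 0$ (at least one $\xi_{e,j}>0$), and cost function $F_e(0)=0$, $F_e(l)=\sigma_e+\sum_j \xi_{e,j} l^{\alpha_j}$ for $l>0$. A strategy profile is $p=(p_1,\dots,p_N)\in P = P_1\times\dots\times P_N$; load $l_e^p=\sum_{i: e\in p_i} w_i(e)$; total cost $C(p)=\sum_e F_e(l_e^p)$; $C^*=\min_{p\in P} C(p)$. $(p'_i,p_{-i})$ is $p$ with the $i$-th coordinate replaced by $p'_i$. A reply $\varrho$-oracle, given a reply collection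 $R$ and tolls $\tau:E\to\mathbb{R}_{>0}$, returns $r \in R$ with $\sum_{e\in r}\tau(e) \le \varrho \sum_{e \in r'}\tau(e)$ for all $r'\in R$. A cost sharing mechanism (CSM) $M=\{f_{i,e}\}$ assigns cost shares $f_{i,e}(p) \geq 0$ with $\sum_i f_{i,e}(p) = F_e(l_e^p)$; it is separable and uniform: $f_{i,e}(p)=0$ if $e \notin p_i$, and $f_{i,e}(p)$ depends only on $w_i(e)$ and the multiset of weights of the other players using $e$. Individual cost $C_i(p)=\sum_e f_{i,e}(p)$. The game is $(\lambda,\mu)$-smooth ($\lambda>0$, $0<\mu<1$) if $\sum_i C_i(p'_i,p_{-i}) \le \lambda C(p') + \mu C(p)$ for all $p,p'$. $\Phi:P\to\mathbb{R}_{>0}$ is a potential function if $\Phi(p')-\Phi(p)=C_i(p')-C_i(p)$ whenever $p,p'$ differ only in coordinate $i$; it is $(A,B)$-bounded ($A,B\ge1$) if $\Phi(p)/A \le C(p) \le B\,\Phi(p)$ for all $p$. Randomized-selection variant of Alg-ABRD: fix small $\epsilon>0$. Values $\widetilde f_{i,e}(p)$ are fixed for all $i,e,p$ with $(1-\epsilon) f_{i,e}(p) \le \widetilde f_{i,e}(p) \le (1+\epsilon) f_{i,e}(p)$, and $\widetilde C_i(p)=\sum_e \widetilde f_{i,e}(p)$. Initial profile $p^0$: for each $i$, $p^0_i$ is the oracle's output on $P_i$ with tolls $\tau_i^0(e)=F_e(w_i(e))$. For $t=1,2,\dots$ up to the step budget: for every $i$ compute $p'_i$ with $\widetilde C_i(p'_i,p^{t-1}_{-i})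 \le \varrho\, \widetilde C_i(p''_i,p^{t-1}_{-i})$ for all $p''_i\in P_i$, and let $\delta_i^t=\widetilde C_i(p^{t-1}) - \epsilon_1 \widetilde C_i(p'_i,p^{t-1}_{-i})$. If $\delta_i^t \le 0$ for all $i$, set $p^t=p^{t-1}$ and stop. Otherwise draw $i\in[N]$ uniformly at random; if $\delta_i^t>0$ set $p^t=(p'_i,p^{t-1}_{-i})$, else $p^t=p^{t-1}$. Output a generated profile $p^{t^*}$ of minimum total cost. Probability is over the random player selections. *)

theory Defs
  imports "HOL-Probability.Probability" "HOL-Library.Multiset"
begin

definition profiles :: "nat \<Rightarrow> (nat \<Rightarrow> 'e set set) \<Rightarrow> (nat \<Rightarrow> 'e set) set" where
  "profiles N P = PiE {..<N} P"

definition load :: "nat \<Rightarrow> (nat \<Rightarrow> 'e \<Rightarrow> nat) \<Rightarrow> (nat \<Rightarrow> 'e set) \<Rightarrow> 'e \<Rightarrow> nat" where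
  "load N w p e = (\<Sum>i\<in>{i. i < N \<and> e \<in> p i}. w i e)"

definition gnd_cost :: "nat \<Rightarrow> (nat \<Rightarrow> real) \<Rightarrow> ('e \<Rightarrow> real) \<Rightarrow> ('e \<Rightarrow> nat \<Rightarrow> real) \<Rightarrow> 'e \<Rightarrow> nat \<Rightarrow> real" where
  "gnd_cost q alpha sig xi e l =
     (if l = 0 then 0 else sig e + (\<Sum>j=1..q. xi e j * real l powr alpha j))"

definition total_cost :: "'e set \<Rightarrow> nat \<Rightarrow> (nat \<Rightarrow> 'e \<Rightarrow> nat) \<Rightarrow> ('e \<Rightarrow> nat \<Rightarrow> real) \<Rightarrow> (nat \<Rightarrow> 'e set) \<Rightarrow> real" where
  "total_cost E N w F p = (\<Sum>e\<in>E. F e (load N w p e))"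

definition opt_cost :: "'e set \<Rightarrow> nat \<Rightarrow> (nat \<Rightarrow> 'e set set) \<Rightarrow> (nat \<Rightarrow> 'e \<Rightarrow> nat) \<Rightarrow> ('e \<Rightarrow> nat \<Rightarrow> real) \<Rightarrow> real" where
  "opt_cost E N P w F = Min (total_cost E N w F ` profiles N P)"

definition indiv_cost :: "'e set \<Rightarrow> (nat \<Rightarrow> 'e \<Rightarrow> (nat \<Rightarrow> 'e set) \<Rightarrow> real) \<Rightarrow> nat \<Rightarrow> (nat \<Rightarrow> 'e set) \<Rightarrow> real" where
  "indiv_cost E f i p = (\<Sum>e\<in>E. f i e p)"

definition is_csm :: "'e set \<Rightarrow> nat \<Rightarrow> (nat \<Rightarrow> 'e set set) \<Rightarrow> (nat \<Rightarrow> 'e \<Rightarrow> nat) \<Rightarrow> ('e \<Rightarrow> nat \<Rightarrow> real)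
    \<Rightarrow> (nat \<Rightarrow> 'e \<Rightarrow> (nat \<Rightarrow> 'e set) \<Rightarrow> real) \<Rightarrow> bool" where
  "is_csm E N P w F f \<longleftrightarrow>
     (\<forall>p\<in>profiles N P. \<forall>e\<in>E. (\<forall>i<N. f i e p \<ge> 0) \<and> (\<Sum>i<N. f i e p) = F e (load N w p e)) \<and>
     (\<forall>p\<in>profiles N P. \<forall>i<N. \<forall>e\<in>E. e \<notin> p i \<longrightarrow> f i e p = 0) \<and>
     (\<exists>g. \<forall>p\<in>profiles N P. \<forall>i<N. \<forall>e\<in>E. e \<in> p i \<longrightarrow>
          f i e p = g e (w i e) (image_mset (\<lambda>k. w k e) (mset_set {k. k < N \<and> k \<noteq> i \<and> e \<in> p k})))"

definition is_smooth :: "'e set \<Rightarrow> nat \<Rightarrow> (nat \<Rightarrow> 'e set set) \<Rightarrow> (nat \<Rightarrow> 'e \<Rightarrow> nat) \<Rightarrow> ('e \<Rightarrow> nat \<Rightarrow> real)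
    \<Rightarrow> (nat \<Rightarrow> 'e \<Rightarrow> (nat \<Rightarrow> 'e set) \<Rightarrow> real) \<Rightarrow> real \<Rightarrow> real \<Rightarrow> bool" where
  "is_smooth E N P w F f lam mu \<longleftrightarrow> lam > 0 \<and> 0 < mu \<and> mu < 1 \<and>
     (\<forall>p\<in>profiles N P. \<forall>p'\<in>profiles N P.
        (\<Sum>i<N. indiv_cost E f i (p(i := p' i))) \<le> lam * total_cost E N w F p' + mu * total_cost E N w F p)"

definition is_potential :: "'e set \<Rightarrow> nat \<Rightarrow> (nat \<Rightarrow> 'e set set)
    \<Rightarrow> (nat \<Rightarrow> 'e \<Rightarrow> (nat \<Rightarrow> 'e set) \<Rightarrow> real) \<Rightarrow> ((nat \<Rightarrow> 'e set) \<Rightarrow> real) \<Rightarrow> bool" where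
  "is_potential E N P f Phi \<longleftrightarrow>
     (\<forall>p\<in>profiles N P. Phi p > 0) \<and>
     (\<forall>p\<in>profiles N P. \<forall>p'\<in>profiles N P. \<forall>i<N. (\<forall>j<N. j \<noteq> i \<longrightarrow> p' j = p j) \<longrightarrow>
        Phi p' - Phi p = indiv_cost E f i p' - indiv_cost E f i p)"

definition bounded_potential :: "'e set \<Rightarrow> nat \<Rightarrow> (nat \<Rightarrow> 'e set set) \<Rightarrow> (nat \<Rightarrow> 'e \<Rightarrow> nat) \<Rightarrow> ('e \<Rightarrow> nat \<Rightarrow> real)
    \<Rightarrow> ((nat \<Rightarrow> 'e set) \<Rightarrow> real) \<Rightarrow> real \<Rightarrow> real \<Rightarrow> bool" where
  "bounded_potential E N P w F Phi A B \<longleftrightarrow> A \<ge> 1 \<and> B \<ge> 1 \<and>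
     (\<forall>p\<in>profiles N P. Phi p / A \<le> total_cost E N w F p \<and> total_cost E N w F p \<le> B * Phi p)"

definition reply_oracle_prop :: "real \<Rightarrow> 'e set \<Rightarrow> 'e set set \<Rightarrow> (('e \<Rightarrow> real) \<Rightarrow> 'e set) \<Rightarrow> bool" where
  "reply_oracle_prop rho E R orc \<longleftrightarrow>
     (\<forall>tau. (\<forall>e\<in>E. tau e > 0) \<longrightarrow>
        orc tau \<in> R \<and> (\<forall>r'\<in>R. (\<Sum>e\<in>orc tau. tau e) \<le> rho * (\<Sum>e\<in>r'. tau e)))"

text \<open>One step of the randomized-selection variant of Alg-ABRD: Ct are the approximate individual
  costs, BR p i the computed approximate best reply, i the randomly drawn player.\<close>
definition abrd_step :: "nat \<Rightarrow> (nat \<Rightarrow> (nat \<Rightarrow> 'e set) \<Rightarrow> real) \<Rightarrow> ((nat \<Rightarrow> 'e set) \<Rightarrow> nat \<Rightarrow> 'e set)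
    \<Rightarrow> real \<Rightarrow> (nat \<Rightarrow> 'e set) \<Rightarrow> nat \<Rightarrow> (nat \<Rightarrow> 'e set)" where
  "abrd_step N Ct BR eps1 p i =
     (let delta = (\<lambda>j. Ct j p - eps1 * Ct j (p(j := BR p j))) in
      if (\<forall>j<N. delta j \<le> 0) then p
      else if delta i > 0 then p(i := BR p i) else p)"

primrec abrd_run :: "('p \<Rightarrow> nat \<Rightarrow> 'p) \<Rightarrow> 'p \<Rightarrow> nat list \<Rightarrow> nat \<Rightarrow> 'p" where
  "abrd_run st p0 xs 0 = p0"
| "abrd_run st p0 xs (Suc t) = st (abrd_run st p0 xs t) (xs ! t)"

text \<open>All possible selection sequences of length L (uniform distribution = independent uniform draws).\<close>
definition sel_seqs :: "nat \<Rightarrow> nat \<Rightarrow> nat list set" where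
  "sel_seqs N L = {xs. length xs = L \<and> set xs \<subseteq> {..<N}}"

end

theory Submission
  imports Defs "HOL-Analysis.Convex"
begin


lemma sel_seqs_0: "sel_seqs N 0 = {[]}"
  by (auto simp: sel_seqs_def)

lemma sel_seqs_Suc: "sel_seqs N (Suc L) = (\<lambda>(x,ys). x # ys) ` ({..<N} \<times> sel_seqs N L)"
proof
  show "sel_seqs N (Suc L) \<subseteq> (\<lambda>(x,ys). x # ys) ` ({..<N} \<times> sel_seqs N L)"
  proof
    fix xs assume "xs \<in> sel_seqs N (Suc L)"
    then obtain x ys where "xs = x # ys" "length ys = L" "x < N" "set ys \<subseteq> {..<N}"
      by (cases xs) (auto simp: sel_seqs_def)
    then show "xs \<in> (\<lambda>(x,ys). x # ys) ` ({..<N} \<times> sel_seqs N L)"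
      by (auto simp: sel_seqs_def image_iff)
  qed
qed (auto simp: sel_seqs_def)

lemma finite_sel_seqs: "finite (sel_seqs N L)"
  by (induction L) (auto simp: sel_seqs_0 sel_seqs_Suc)

lemma inj_cons: "inj_on (\<lambda>(x,ys). x # ys) A"
  by (auto simp: inj_on_def)

lemma sum_sel_seqs_Suc:
  "(\<Sum>xs\<in>sel_seqs N (Suc L). g xs) = (\<Sum>x<N. \<Sum>ys\<in>sel_seqs N L. g (x # ys))"
proof -
  have "(\<Sum>xs\<in>sel_seqs N (Suc L). g xs) = (\<Sum>z\<in>{..<N} \<times> sel_seqs N L. g ((\<lambda>(x,ys). x # ys) z))"
    unfolding sel_seqs_Suc by (rule sum.reindex[OF inj_cons, unfolded comp_def])
  also have "\<dots> = (\<Sum>x<N. \<Sum>ys\<in>sel_seqs N L. g (x # ys))"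
    by (subst sum.cartesian_product) (auto intro!: sum.cong split: prod.splits)
  finally show ?thesis .
qed

lemma card_sel_seqs: "card (sel_seqs N L) = N ^ L"
proof (induction L)
  case 0 then show ?case by (simp add: sel_seqs_0)
next
  case (Suc L)
  have "card (sel_seqs N (Suc L)) = card ({..<N} \<times> sel_seqs N L)"
    unfolding sel_seqs_Suc by (rule card_image[OF inj_cons])
  then show ?case using Suc by (simp add: card_cartesian_product)
qed

lemma sel_seqs_ne: "N > 0 \<or> L = 0 \<Longrightarrow> sel_seqs N L \<noteq> {}"
  using card_sel_seqs[of N L] by (metis card.empty gr_implies_not0 power_0 power_not_zero zero_neq_one)

fun Hf :: "('p \<Rightarrow> nat \<Rightarrow> 'p) \<Rightarrow> ('p \<Rightarrow> bool) \<Rightarrow> ('p \<Rightarrow> real) \<Rightarrow> 'p \<Rightarrow> nat list \<Rightarrow> nat \<Rightarrow> real" where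
  "Hf st bad V p xs 0 = (if bad p then V p else 0)"
| "Hf st bad V p [] (Suc k) = 0"
| "Hf st bad V p (x#xs) (Suc k) = (if bad p then Hf st bad V (st p x) xs k else 0)"

lemma abrd_run_Cons: "abrd_run st p (x # xs) (Suc t) = abrd_run st (st p x) xs t"
  by (induction t) auto

lemma abrd_run_in:
  assumes "\<And>p x. p \<in> S \<Longrightarrow> x < N \<Longrightarrow> st p x \<in> S"
  shows "p \<in> S \<Longrightarrow> set xs \<subseteq> {..<N} \<Longrightarrow> t \<le> length xs \<Longrightarrow> abrd_run st p xs t \<in> S"
proof (induction t)
  case (Suc t)
  then have "xs ! t < N" by (meson Suc_le_lessD lessThan_iff nth_mem subsetD)
  with Suc show ?case by (auto intro: assms)
qed simp

lemma Hf_run: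
  "(\<forall>t\<le>k. bad (abrd_run st p xs t)) \<Longrightarrow> k \<le> length xs \<Longrightarrow> Hf st bad V p xs k = V (abrd_run st p xs k)"
proof (induction k arbitrary: p xs)
  case 0 then show ?case by simp
next
  case (Suc k)
  then obtain x ys where xs: "xs = x # ys" by (cases xs) auto
  have "bad p" using Suc.prems(1) by (metis abrd_run.simps(1) le0)
  have "\<forall>t\<le>k. bad (abrd_run st (st p x) ys t)"
    using Suc.prems(1) unfolding xs by (metis Suc_le_mono abrd_run_Cons)
  have "Hf st bad V p xs (Suc k) = Hf st bad V (st p x) ys k" using \<open>bad p\<close> by (simp add: xs)
  also have "\<dots> = V (abrd_run st (st p x) ys k)"
    using Suc.IH[of "st p x" ys] Suc.prems(2) \<open>\<forall>t\<le>k. bad (abrd_run st (st p x) ys t)\<close> xs by simp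
  also have "\<dots> = V (abrd_run st p xs (Suc k))" by (simp only: xs abrd_run_Cons)
  finally show ?case .
qed

lemma Hf_sum:
  fixes r :: real
  assumes Vnn: "\<And>p. p \<in> S \<Longrightarrow> V p \<ge> 0"
    and stS: "\<And>p x. p \<in> S \<Longrightarrow> x < N \<Longrightarrow> st p x \<in> S"
    and drop: "\<And>p. p \<in> S \<Longrightarrow> bad p \<Longrightarrow> (\<Sum>x<N. V (st p x)) \<le> real N * r * V p"
    and r: "r \<ge> 0"
  shows "p \<in> S \<Longrightarrow> k \<le> L \<Longrightarrow> (\<Sum>xs\<in>sel_seqs N L. Hf st bad V p xs k) \<le> real N ^ L * r ^ k * V p"
proof (induction k arbitrary: p L)
  case 0
  have "(\<Sum>xs\<in>sel_seqs N L. Hf st bad V p xs 0) = real N ^ L * (if bad p then V p else 0)"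
    by (simp add: card_sel_seqs)
  also have "\<dots> \<le> real N ^ L * V p" using Vnn[OF 0(1)] by auto
  finally show ?case by simp
next
  case (Suc k)
  then obtain L' where L: "L = Suc L'" and kL: "k \<le> L'" by (cases L) auto
  show ?case
  proof (cases "bad p")
    case True
    have "(\<Sum>xs\<in>sel_seqs N L. Hf st bad V p xs (Suc k))
        = (\<Sum>x<N. \<Sum>ys\<in>sel_seqs N L'. Hf st bad V (st p x) ys k)"
      unfolding L sum_sel_seqs_Suc using True by simp
    also have "\<dots> \<le> (\<Sum>x<N. real N ^ L' * r ^ k * V (st p x))"
      by (rule sum_mono) (use Suc.IH stS Suc.prems kL in auto)
    also have "\<dots> = real N ^ L' * r ^ k * (\<Sum>x<N. V (st p x))"
      by (simp add: sum_distrib_left)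
    also have "\<dots> \<le> real N ^ L' * r ^ k * (real N * r * V p)"
      by (rule mult_left_mono[OF drop[OF Suc.prems(1) True]]) (use r in simp)
    also have "\<dots> = real N ^ L * r ^ Suc k * V p" by (simp add: L)
    finally show ?thesis .
  next
    case False
    have "(\<Sum>xs\<in>sel_seqs N L. Hf st bad V p xs (Suc k)) = 0"
      unfolding L sum_sel_seqs_Suc using False by simp
    also have "0 \<le> real N ^ L * r ^ Suc k * V p" using Vnn[OF Suc.prems(1)] r by simp
    finally show ?thesis .
  qed
qed



lemma power_mean:
  fixes y :: "'i \<Rightarrow> real"
  assumes fin: "finite I" and ne: "I \<noteq> {}" and pos: "\<And>i. i \<in> I \<Longrightarrow> y i > 0" and a: "a \<ge> 1"
  shows "(\<Sum>i\<in>I. y i) powr a \<le> real (card I) powr (a - 1) * (\<Sum>i\<in>I. y i powr a)"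
proof -
  define k where "k = real (card I)"
  have k: "k > 0" using fin ne by (simp add: k_def card_gt_0_iff)
  have "(\<lambda>x. x powr a) ((\<Sum>i\<in>I. (1/k) *\<^sub>R y i)) \<le> (\<Sum>i\<in>I. (1/k) * (\<lambda>x. x powr a) (y i))"
    by (rule convex_on_sum[OF fin ne powr_convex[OF a]]) (use pos k in \<open>auto simp: k_def\<close>)
  then have 1: "((\<Sum>i\<in>I. y i) / k) powr a \<le> (\<Sum>i\<in>I. y i powr a) / k"
    by (simp add: sum_distrib_left[symmetric] sum_divide_distrib)
  have s: "(\<Sum>i\<in>I. y i) > 0" using pos fin ne by (simp add: sum_pos)
  have "((\<Sum>i\<in>I. y i) / k) powr a = (\<Sum>i\<in>I. y i) powr a / k powr a"
    using s k by (simp add: powr_divide)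
  with 1 have "(\<Sum>i\<in>I. y i) powr a \<le> k powr a * ((\<Sum>i\<in>I. y i powr a) / k)"
    using k by (simp add: divide_le_eq mult.commute)
  also have "\<dots> = k powr (a - 1) * (\<Sum>i\<in>I. y i powr a)"
    using k by (simp add: powr_diff)
  finally show ?thesis by (simp add: k_def)
qed

lemma swap_lemma:
  fixes g :: "nat \<Rightarrow> 'e \<Rightarrow> real"
  assumes "finite E" "\<forall>i<N. p i \<subseteq> E"
  shows "(\<Sum>e\<in>E. \<Sum>i\<in>{i. i < N \<and> e \<in> p i}. g i e) = (\<Sum>i<N. \<Sum>e\<in>p i. g i e)"
proof -
  have "(\<Sum>e\<in>E. \<Sum>i\<in>{i. i < N \<and> e \<in> p i}. g i e) = (\<Sum>e\<in>E. \<Sum>i<N. if e \<in> p i then g i e else 0)"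
    by (rule sum.cong[OF refl]) (simp add: sum.If_cases Collect_conj_eq lessThan_def Int_commute)
  also have "\<dots> = (\<Sum>i<N. \<Sum>e\<in>E. if e \<in> p i then g i e else 0)" by (rule sum.swap)
  also have "\<dots> = (\<Sum>i<N. \<Sum>e\<in>p i. g i e)"
  proof (rule sum.cong[OF refl])
    fix i assume "i \<in> {..<N}"
    then have "E \<inter> p i = p i" using assms by auto
    then show "(\<Sum>e\<in>E. if e \<in> p i then g i e else 0) = (\<Sum>e\<in>p i. g i e)"
      using assms(1) by (simp add: sum.If_cases Int_def)
  qed
  finally show ?thesis .
qed



locale gnd =
  fixes E :: "'e set" and N :: nat and P :: "nat \<Rightarrow> 'e set set" and w :: "nat \<Rightarrow> 'e \<Rightarrow> nat"
    and q :: nat and alpha :: "nat \<Rightarrow> real" and sig :: "'e \<Rightarrow> real" and xi :: "'e \<Rightarrow> nat \<Rightarrow> real"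
    and rho :: real and orc :: "'e set set \<Rightarrow> ('e \<Rightarrow> real) \<Rightarrow> 'e set"
    and f :: "nat \<Rightarrow> 'e \<Rightarrow> (nat \<Rightarrow> 'e set) \<Rightarrow> real"
    and ft :: "nat \<Rightarrow> 'e \<Rightarrow> (nat \<Rightarrow> 'e set) \<Rightarrow> real"
    and BR :: "(nat \<Rightarrow> 'e set) \<Rightarrow> nat \<Rightarrow> 'e set"
    and Phi :: "(nat \<Rightarrow> 'e set) \<Rightarrow> real"
    and A B lam mu eps eps1 :: real
  assumes finE: "finite E"
    and P_sub: "\<forall>i<N. P i \<subseteq> Pow E \<and> P i \<noteq> {}"
    and w_pos: "\<forall>i<N. \<forall>e\<in>E. w i e \<ge> 1"
    and q_pos: "q \<ge> 1"
    and alpha_gt: "\<forall>j\<in>{1..q}. alpha j > 1"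
    and sigma_nn: "\<forall>e\<in>E. sig e \<ge> 0"
    and xi_nn: "\<forall>e\<in>E. \<forall>j\<in>{1..q}. xi e j \<ge> 0"
    and xi_pos: "\<forall>e\<in>E. \<exists>j\<in>{1..q}. xi e j > 0"
    and rho_ge: "rho \<ge> 1"
    and orc: "\<forall>i<N. reply_oracle_prop rho E (P i) (orc (P i))"
    and csm: "is_csm E N P w (gnd_cost q alpha sig xi) f"
    and pot: "is_potential E N P f Phi"
    and pot_bd: "bounded_potential E N P w (gnd_cost q alpha sig xi) Phi A B"
    and smooth: "is_smooth E N P w (gnd_cost q alpha sig xi) f lam mu"
    and eps: "0 < eps" "eps < 1"
    and eps1_def: "eps1 = (1 + eps) / (1 - eps)"
    and mu_small: "mu < 1 / (rho * eps1\<^sup>2)"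
    and ft_approx: "\<forall>p\<in>profiles N P. \<forall>i<N. \<forall>e\<in>E.
                      (1 - eps) * f i e p \<le> ft i e p \<and> ft i e p \<le> (1 + eps) * f i e p"
    and BR_spec: "\<forall>p\<in>profiles N P. \<forall>i<N. BR p i \<in> P i \<and>
                    (\<forall>r\<in>P i. indiv_cost E ft i (p(i := BR p i)) \<le> rho * indiv_cost E ft i (p(i := r)))"
begin

abbreviation "F \<equiv> gnd_cost q alpha sig xi"
abbreviation "C \<equiv> total_cost E N w F"
abbreviation "Prof \<equiv> profiles N P"
abbreviation "Ci i p \<equiv> indiv_cost E f i p"
abbreviation "Ct i p \<equiv> indiv_cost E ft i p"
abbreviation "st \<equiv> abrd_step N (indiv_cost E ft) BR eps1"
abbreviation "Copt \<equiv> opt_cost E N P w F"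
definition "d = 1 - rho * eps1\<^sup>2 * mu"
definition "K = rho * eps1\<^sup>2 * lam / d"
definition "dl i p = Ct i p - eps1 * Ct i (p(i := BR p i))"

lemma eps1_ge: "eps1 \<ge> 1"
  using eps by (simp add: eps1_def)

lemma mu_pos: "mu > 0" and mu_lt1: "mu < 1" and lam_pos: "lam > 0"
  using smooth by (auto simp: is_smooth_def)

lemma A_ge: "A \<ge> 1" and B_ge: "B \<ge> 1"
  using pot_bd by (auto simp: bounded_potential_def)

lemma re_ge: "rho * eps1\<^sup>2 \<ge> 1"
proof -
  have "eps1\<^sup>2 \<ge> 1" using eps1_ge by (simp add: one_le_power)
  then show ?thesis using rho_ge by (metis mult_mono' mult_1 zero_le_one)
qed

lemma d_pos: "d > 0" and d_le: "d \<le> 1"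
proof -
  have "rho * eps1\<^sup>2 * mu < 1" using mu_small re_ge
    by (simp add: less_divide_eq mult.commute)
  then show "d > 0" by (simp add: d_def)
  show "d \<le> 1" using re_ge mu_pos by (simp add: d_def)
qed

lemma Phi_pos: "p \<in> Prof \<Longrightarrow> Phi p > 0"
  using pot by (auto simp: is_potential_def)

lemma Phi_le: "p \<in> Prof \<Longrightarrow> Phi p \<le> A * C p"
  using pot_bd A_ge by (auto simp: bounded_potential_def divide_le_eq mult.commute)

lemma C_le: "p \<in> Prof \<Longrightarrow> C p \<le> B * Phi p"
  using pot_bd by (auto simp: bounded_potential_def)

lemma fin_Prof: "finite Prof"
proof -
  have "\<forall>i<N. finite (P i)" using P_sub finE by (meson finite_Pow_iff rev_finite_subset)
  then show ?thesis unfolding profiles_def by (intro finite_PiE) auto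
qed

lemma Prof_ne: "Prof \<noteq> {}"
  using P_sub unfolding profiles_def by (auto simp: PiE_eq_empty_iff)

lemma Prof_sub: "p \<in> Prof \<Longrightarrow> i < N \<Longrightarrow> p i \<in> P i \<and> p i \<subseteq> E"
  using P_sub by (auto simp: profiles_def PiE_def Pi_def)

lemma Prof_upd: "p \<in> Prof \<Longrightarrow> i < N \<Longrightarrow> r \<in> P i \<Longrightarrow> p(i := r) \<in> Prof"
  unfolding profiles_def by (auto simp: PiE_def Pi_def extensional_def)

lemma st_in: "p \<in> Prof \<Longrightarrow> x < N \<Longrightarrow> st p x \<in> Prof"
  using BR_spec Prof_upd unfolding abrd_step_def by (auto simp: Let_def)

lemma opt_ex: obtains ps where "ps \<in> Prof" "C ps = Copt"
proof -
  have "Min (C ` Prof) \<in> C ` Prof" using Min_in[OF finite_imageI[OF fin_Prof]] Prof_ne by auto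
  then show ?thesis using that unfolding opt_cost_def by auto
qed

lemma opt_le: "p \<in> Prof \<Longrightarrow> Copt \<le> C p"
  unfolding opt_cost_def using fin_Prof by (auto intro: Min_le)

lemma F_nn: "e \<in> E \<Longrightarrow> F e l \<ge> 0"
  using sigma_nn xi_nn by (auto simp: gnd_cost_def intro!: sum_nonneg add_nonneg_nonneg)

lemma F_pos: "e \<in> E \<Longrightarrow> l \<ge> 1 \<Longrightarrow> F e l > 0"
proof -
  assume e: "e \<in> E" and l: "l \<ge> 1"
  obtain j where j: "j \<in> {1..q}" "xi e j > 0" using xi_pos e by auto
  have "(\<Sum>j=1..q. xi e j * real l powr alpha j) > 0"
    by (rule sum_pos2[OF _ j(1)]) (use j l xi_nn e in auto)
  moreover have "sig e \<ge> 0" using sigma_nn e by auto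
  ultimately show ?thesis using l by (simp add: gnd_cost_def)
qed

lemma F_mono: "e \<in> E \<Longrightarrow> 1 \<le> a \<Longrightarrow> a \<le> b \<Longrightarrow> F e a \<le> F e b"
  using xi_nn alpha_gt unfolding gnd_cost_def
  by (auto intro!: sum_mono mult_left_mono powr_mono2)

lemma C_sum: "p \<in> Prof \<Longrightarrow> C p = (\<Sum>i<N. Ci i p)"
proof -
  assume p: "p \<in> Prof"
  have "C p = (\<Sum>e\<in>E. \<Sum>i<N. f i e p)"
    using csm p unfolding total_cost_def is_csm_def by (auto intro!: sum.cong)
  also have "\<dots> = (\<Sum>i<N. Ci i p)" unfolding indiv_cost_def by (rule sum.swap)
  finally show ?thesis .
qed

lemma Ci_nn: "p \<in> Prof \<Longrightarrow> i < N \<Longrightarrow> Ci i p \<ge> 0"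
  using csm unfolding is_csm_def indiv_cost_def by (auto intro!: sum_nonneg)

lemma Ct_lo: "p \<in> Prof \<Longrightarrow> i < N \<Longrightarrow> (1 - eps) * Ci i p \<le> Ct i p"
  using ft_approx unfolding indiv_cost_def by (auto simp: sum_distrib_left intro!: sum_mono)

lemma Ct_hi: "p \<in> Prof \<Longrightarrow> i < N \<Longrightarrow> Ct i p \<le> (1 + eps) * Ci i p"
  using ft_approx unfolding indiv_cost_def by (auto simp: sum_distrib_left intro!: sum_mono)

end

context gnd begin

lemma move_drop:
  assumes p: "p \<in> Prof" and x: "x < N"
  shows "Phi p - Phi (st p x) \<ge> dl x p / (1 + eps)"
proof (cases "(\<forall>j<N. dl j p \<le> 0) \<or> dl x p \<le> 0")
  case True
  then have "st p x = p \<and> dl x p \<le> 0" using x unfolding abrd_step_def dl_def[abs_def] by (auto simp: Let_def)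
  then show ?thesis using eps by (simp add: divide_nonpos_pos)
next
  case False
  define p' where "p' = p(x := BR p x)"
  have st: "st p x = p'" using False unfolding abrd_step_def dl_def[abs_def] p'_def by (auto simp: Let_def)
  have p': "p' \<in> Prof" using st st_in[OF p x] by simp
  have "Phi p' - Phi p = Ci x p' - Ci x p"
    using pot p p' x unfolding is_potential_def p'_def by auto
  moreover have "Ct x p \<le> (1 + eps) * Ci x p" using Ct_hi[OF p x] .
  moreover have "(1 - eps) * Ci x p' \<le> Ct x p'" using Ct_lo[OF p' x] .
  moreover have "dl x p = Ct x p - eps1 * Ct x p'" unfolding dl_def p'_def ..
  ultimately have h: "Phi p' - Phi p = Ci x p' - Ci x p" "Ct x p \<le> (1 + eps) * Ci x p"
    "(1 - eps) * Ci x p' \<le> Ct x p'" "dl x p = Ct x p - eps1 * Ct x p'" by auto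
  have a: "Ct x p / (1 + eps) \<le> Ci x p" using h(2) eps by (simp add: divide_le_eq mult.commute)
  have b: "Ci x p' \<le> Ct x p' / (1 - eps)" using h(3) eps by (simp add: le_divide_eq mult.commute)
  have c0: "\<And>u v a b::real. u > 0 \<Longrightarrow> v > 0 \<Longrightarrow> (a - v / u * b) / v = a / v - b / u"
    by (simp add: field_simps)
  have c: "dl x p / (1 + eps) = Ct x p / (1 + eps) - Ct x p' / (1 - eps)"
    by (subst h(4)) (use c0[of "1 - eps" "1 + eps" "Ct x p" "Ct x p'"] eps in \<open>simp add: eps1_def\<close>)
  show ?thesis unfolding st using a b c h(1) by linarith
qed

lemma dl_lo:
  assumes p: "p \<in> Prof" and x: "x < N" and ps: "ps \<in> Prof"
  shows "dl x p \<ge> (1 - eps) * (Ci x p - rho * eps1\<^sup>2 * Ci x (p(x := ps x)))"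
proof -
  have psx: "ps x \<in> P x" using Prof_sub[OF ps x] by auto
  have pr: "p(x := ps x) \<in> Prof" using Prof_upd[OF p x psx] .
  have 1: "Ct x p \<ge> (1 - eps) * Ci x p" using Ct_lo[OF p x] .
  have 2: "Ct x (p(x := BR p x)) \<le> rho * Ct x (p(x := ps x))" using BR_spec p x psx by auto
  have 3: "Ct x (p(x := ps x)) \<le> (1 + eps) * Ci x (p(x := ps x))" using Ct_hi[OF pr x] .
  have 4: "eps1 * Ct x (p(x := BR p x)) \<le> eps1 * (rho * ((1 + eps) * Ci x (p(x := ps x))))"
    using 2 3 eps1_ge rho_ge by (meson dual_order.trans less_eq_real_def mult_left_mono zero_le_one order_trans)
  have 5: "eps1 * (rho * ((1 + eps) * Ci x (p(x := ps x)))) = (1 - eps) * (rho * eps1\<^sup>2 * Ci x (p(x := ps x)))"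
  proof -
    have g: "\<And>u v::real. u > 0 \<Longrightarrow> v / u * v = u * (v / u)\<^sup>2"
      by (simp add: power2_eq_square field_simps)
    have "eps1 * (1 + eps) = (1 - eps) * eps1\<^sup>2"
      using eps g[of "1 - eps" "1 + eps"] unfolding eps1_def by simp
    then show ?thesis by (metis (no_types, opaque_lifting) mult.assoc mult.left_commute)
  qed
  show ?thesis using 1 4 5 unfolding dl_def by (simp add: right_diff_distrib)
qed

end

context gnd begin

lemma C_nn: "p \<in> Prof \<Longrightarrow> C p \<ge> 0"
proof -
  assume p: "p \<in> Prof"
  have "(\<Sum>i<N. Ci i p) \<ge> 0" by (rule sum_nonneg) (use Ci_nn p in auto)
  then show ?thesis using C_sum p by simp
qed

lemma drop_sum:
  assumes p: "p \<in> Prof" and N: "N > 0" and bad: "C p > 2 * K * Copt"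
  shows "(\<Sum>x<N. Phi (st p x)) \<le> real N * (1 - 1 / (2 * eps1 * real N * A / d)) * Phi p"
proof -
  obtain ps where ps: "ps \<in> Prof" "C ps = Copt" by (rule opt_ex)
  define re where "re = rho * eps1\<^sup>2"
  have re: "re \<ge> 1" using re_ge by (simp add: re_def)
  have S1: "(\<Sum>x<N. Phi p - Phi (st p x)) \<ge> (\<Sum>x<N. dl x p) / (1 + eps)"
    unfolding sum_divide_distrib by (rule sum_mono) (use move_drop p in auto)
  have S2: "(\<Sum>x<N. dl x p) \<ge> (\<Sum>x<N. (1 - eps) * (Ci x p - re * Ci x (p(x := ps x))))"
    by (rule sum_mono) (use dl_lo p ps in \<open>auto simp: re_def\<close>)
  have S2': "(\<Sum>x<N. (1 - eps) * (Ci x p - re * Ci x (p(x := ps x))))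
      = (1 - eps) * (C p - re * (\<Sum>x<N. Ci x (p(x := ps x))))"
    using C_sum[OF p] by (simp add: sum_distrib_left sum_subtractf right_diff_distrib)
  have S3: "(\<Sum>x<N. Ci x (p(x := ps x))) \<le> lam * Copt + mu * C p"
    using smooth p ps ps(2)[symmetric] unfolding is_smooth_def by metis
  have S4: "(\<Sum>x<N. dl x p) \<ge> (1 - eps) * (d * C p - re * lam * Copt)"
  proof -
    have "re * (\<Sum>x<N. Ci x (p(x := ps x))) \<le> re * (lam * Copt + mu * C p)"
      using S3 re by (simp add: mult_left_mono)
    then have "C p - re * (\<Sum>x<N. Ci x (p(x := ps x))) \<ge> d * C p - re * lam * Copt"
      by (simp add: d_def re_def algebra_simps)
    then have "(1 - eps) * (C p - re * (\<Sum>x<N. Ci x (p(x := ps x)))) \<ge> (1 - eps) * (d * C p - re * lam * Copt)"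
      using eps by (simp add: mult_left_mono)
    then show ?thesis using S2 S2' by linarith
  qed
  have S5: "d * C p - re * lam * Copt \<ge> d * C p / 2"
  proof -
    have "re * lam * Copt = d * (K * Copt)" using d_pos by (simp add: K_def re_def)
    also have "\<dots> \<le> d * (C p / 2)" using bad d_pos by (simp add: mult_left_mono)
    finally show ?thesis by simp
  qed
  have S6: "(\<Sum>x<N. Phi p - Phi (st p x)) \<ge> (1 - eps) / (1 + eps) * (d * C p / 2)"
  proof -
    have "(1 - eps) * (d * C p / 2) \<le> (\<Sum>x<N. dl x p)"
      using S4 S5 eps by (meson less_eq_real_def mult_left_mono diff_ge_0_iff_ge order_trans)
    then have "(1 - eps) * (d * C p / 2) / (1 + eps) \<le> (\<Sum>x<N. dl x p) / (1 + eps)"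
      using eps by (intro divide_right_mono) auto
    moreover have "(1 - eps) / (1 + eps) * (d * C p / 2) = (1 - eps) * (d * C p / 2) / (1 + eps)" by simp
    ultimately show ?thesis using S1 by linarith
  qed
  have S7: "(1 - eps) / (1 + eps) * (d * C p / 2) \<ge> d * Phi p / (2 * eps1 * A)"
  proof -
    have "(1 - eps) / (1 + eps) = 1 / eps1" using eps by (simp add: eps1_def)
    moreover have "Phi p / A \<le> C p" using Phi_le[OF p] A_ge by (simp add: divide_le_eq mult.commute)
    moreover have "d / (2 * eps1) \<ge> 0" using d_pos eps1_ge by simp
    ultimately have "d / (2 * eps1) * (Phi p / A) \<le> d / (2 * eps1) * C p"
      by (intro mult_left_mono) auto
    moreover have "(1 - eps) / (1 + eps) * (d * C p / 2) = d / (2 * eps1) * C p"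
      using \<open>(1 - eps) / (1 + eps) = 1 / eps1\<close> by simp
    moreover have "d * Phi p / (2 * eps1 * A) = d / (2 * eps1) * (Phi p / A)" by simp
    ultimately show ?thesis by linarith
  qed
  have Q: "real N * (1 / (2 * eps1 * real N * A / d)) * Phi p = d * Phi p / (2 * eps1 * A)"
    using N by (simp add: field_simps)
  have "(\<Sum>x<N. Phi p - Phi (st p x)) = real N * Phi p - (\<Sum>x<N. Phi (st p x))"
    by (simp add: sum_subtractf)
  then show ?thesis using S6 S7 Q by (simp add: algebra_simps)
qed

end

context gnd begin

definition "amax = Max (alpha ` {1..q})"
definition "p0 = restrict (\<lambda>i. orc (P i) (\<lambda>e. F e (w i e))) {..<N}"
definition "cc i r = (\<Sum>e\<in>r. F e (w i e))"

lemma amax_ge: "j \<in> {1..q} \<Longrightarrow> alpha j \<le> amax"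
  unfolding amax_def by (rule Max_ge) auto

lemma amax_gt: "amax > 1"
  using amax_ge[of 1] alpha_gt q_pos by force

lemma p0_props: "p0 \<in> Prof" "\<And>i r. i < N \<Longrightarrow> r \<in> P i \<Longrightarrow> cc i (p0 i) \<le> rho * cc i r"
proof -
  have key: "orc (P i) (\<lambda>e. F e (w i e)) \<in> P i \<and>
      (\<forall>r\<in>P i. cc i (orc (P i) (\<lambda>e. F e (w i e))) \<le> rho * cc i r)" if i: "i < N" for i
  proof -
    define tau where "tau = (\<lambda>e. F e (w i e))"
    have pos: "\<forall>e\<in>E. tau e > 0" using F_pos w_pos i unfolding tau_def by auto
    from orc i have "reply_oracle_prop rho E (P i) (orc (P i))" by auto
    then have "orc (P i) tau \<in> P i \<and> (\<forall>r'\<in>P i. sum tau (orc (P i) tau) \<le> rho * sum tau r')"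
      using pos unfolding reply_oracle_prop_def by blast
    then show ?thesis unfolding cc_def tau_def .
  qed
  show "p0 \<in> Prof" using key unfolding p0_def profiles_def by auto
  show "\<And>i r. i < N \<Longrightarrow> r \<in> P i \<Longrightarrow> cc i (p0 i) \<le> rho * cc i r"
    using key unfolding p0_def by auto
qed

lemma load_bound:
  assumes p: "p \<in> Prof" and e: "e \<in> E" and N: "N > 0"
  shows "F e (load N w p e) \<le> real N powr (amax - 1) * (\<Sum>i\<in>{i. i < N \<and> e \<in> p i}. F e (w i e))"
proof -
  define I where "I = {i. i < N \<and> e \<in> p i}"
  define Np where "Np = real N powr (amax - 1)"
  have finI: "finite I" unfolding I_def by simp
  have Np: "Np \<ge> 1" unfolding Np_def using N amax_gt by (simp add: ge_one_powr_ge_zero)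
  show ?thesis
  proof (cases "I = {}")
    case True
    then show ?thesis unfolding I_def[symmetric] load_def by (simp add: gnd_cost_def)
  next
    case False
    define k where "k = card I"
    have k1: "k \<ge> 1" using False finI by (simp add: k_def Suc_le_eq card_gt_0_iff)
    have kN: "k \<le> N" unfolding k_def I_def
      using card_mono[of "{..<N}" "{i. i < N \<and> e \<in> p i}"] by auto
    have wI: "\<And>i. i \<in> I \<Longrightarrow> w i e \<ge> 1" using w_pos e unfolding I_def by auto
    define L where "L = load N w p e"
    have L: "real L = (\<Sum>i\<in>I. real (w i e))" unfolding L_def load_def I_def by simp
    have L1: "L \<ge> 1"
    proof -
      obtain i where "i \<in> I" using False by auto
      then have "w i e \<le> L" unfolding L_def load_def I_def[symmetric]
        using finI by (intro member_le_sum) auto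
      then show ?thesis using wI \<open>i \<in> I\<close> by fastforce
    qed
    have pj: "real L powr alpha j \<le> Np * (\<Sum>i\<in>I. real (w i e) powr alpha j)" if j: "j \<in> {1..q}" for j
    proof -
      have aj: "alpha j \<ge> 1" using alpha_gt j by force
      have "real L powr alpha j \<le> real k powr (alpha j - 1) * (\<Sum>i\<in>I. real (w i e) powr alpha j)"
        unfolding L k_def by (rule power_mean[OF finI False _ aj]) (use wI in force)
      also have "\<dots> \<le> Np * (\<Sum>i\<in>I. real (w i e) powr alpha j)"
      proof (rule mult_right_mono)
        have "real k powr (alpha j - 1) \<le> real N powr (alpha j - 1)"
          using kN aj k1 by (intro powr_mono2) auto
        also have "\<dots> \<le> Np" unfolding Np_def using amax_ge[OF j] N
          by (intro powr_mono) auto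
        finally show "real k powr (alpha j - 1) \<le> Np" .
      qed (auto intro: sum_nonneg)
      finally show ?thesis .
    qed
    have "F e L = sig e + (\<Sum>j=1..q. xi e j * real L powr alpha j)"
      using L1 by (simp add: gnd_cost_def)
    also have "\<dots> \<le> Np * (real k * sig e) + (\<Sum>j=1..q. xi e j * (Np * (\<Sum>i\<in>I. real (w i e) powr alpha j)))"
    proof (rule add_mono)
      have "1 * 1 \<le> Np * real k" using Np k1 by (intro mult_mono) auto
      moreover have "sig e \<ge> 0" using sigma_nn e by auto
      ultimately have "1 * sig e \<le> (Np * real k) * sig e" by (intro mult_right_mono) auto
      then show "sig e \<le> Np * (real k * sig e)" by (simp add: mult.assoc)
      show "(\<Sum>j = 1..q. xi e j * real L powr alpha j) \<le> (\<Sum>j = 1..q. xi e j * (Np * (\<Sum>i\<in>I. real (w i e) powr alpha j)))"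
        by (rule sum_mono, rule mult_left_mono) (use pj xi_nn e in auto)
    qed
    also have "\<dots> = Np * (\<Sum>i\<in>I. F e (w i e))"
    proof -
      have "(\<Sum>i\<in>I. F e (w i e)) = (\<Sum>i\<in>I. sig e + (\<Sum>j=1..q. xi e j * real (w i e) powr alpha j))"
      proof (rule sum.cong[OF refl])
        fix i assume "i \<in> I"
        then have "w i e \<noteq> 0" using wI by fastforce
        then show "F e (w i e) = sig e + (\<Sum>j=1..q. xi e j * real (w i e) powr alpha j)"
          by (simp add: gnd_cost_def)
      qed
      also have "\<dots> = real k * sig e + (\<Sum>j=1..q. xi e j * (\<Sum>i\<in>I. real (w i e) powr alpha j))"
        by (simp add: sum.distrib k_def sum_distrib_left sum.swap[of _ I])
      finally show ?thesis by (simp add: distrib_left sum_distrib_left algebra_simps)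
    qed
    finally show ?thesis unfolding L_def Np_def I_def .
  qed
qed

end

context gnd begin

lemma p0_bound:
  assumes N: "N > 0"
  shows "C p0 \<le> rho * real N powr amax * Copt"
proof -
  obtain ps where ps: "ps \<in> Prof" "C ps = Copt" by (rule opt_ex)
  define Np where "Np = real N powr (amax - 1)"
  have Np: "Np \<ge> 0" unfolding Np_def by simp
  have sub0: "\<forall>i<N. p0 i \<subseteq> E" using Prof_sub[OF p0_props(1)] by auto
  have subs: "\<forall>i<N. ps i \<subseteq> E" using Prof_sub[OF ps(1)] by auto
  have "C p0 = (\<Sum>e\<in>E. F e (load N w p0 e))" unfolding total_cost_def ..
  also have "\<dots> \<le> (\<Sum>e\<in>E. Np * (\<Sum>i\<in>{i. i < N \<and> e \<in> p0 i}. F e (w i e)))"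
    unfolding Np_def by (rule sum_mono) (rule load_bound[OF p0_props(1) _ N])
  also have "\<dots> = Np * (\<Sum>i<N. cc i (p0 i))"
    unfolding sum_distrib_left[symmetric] cc_def using swap_lemma[OF finE sub0] by simp
  also have "\<dots> \<le> Np * (\<Sum>i<N. rho * cc i (ps i))"
    using Prof_sub[OF ps(1)] p0_props(2) by (intro mult_left_mono[OF sum_mono Np]) auto
  also have "\<dots> = Np * rho * (\<Sum>i<N. cc i (ps i))" by (simp add: sum_distrib_left mult.assoc)
  also have "(\<Sum>i<N. cc i (ps i)) \<le> (\<Sum>i<N. \<Sum>e\<in>ps i. F e (load N w ps e))"
    unfolding cc_def
  proof (intro sum_mono)
    fix i e assume i: "i \<in> {..<N}" and e: "e \<in> ps i"
    have eE: "e \<in> E" using subs i e by auto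
    have w1: "1 \<le> w i e" using w_pos i eE by auto
    have "w i e \<le> load N w ps e" unfolding load_def using i e
      by (intro member_le_sum) auto
    then show "F e (w i e) \<le> F e (load N w ps e)" using F_mono[OF eE w1] by simp
  qed
  also have "\<dots> = (\<Sum>e\<in>E. \<Sum>i\<in>{i. i < N \<and> e \<in> ps i}. F e (load N w ps e))"
    by (rule swap_lemma[OF finE subs, symmetric])
  also have "\<dots> \<le> (\<Sum>e\<in>E. real N * F e (load N w ps e))"
  proof (rule sum_mono)
    fix e assume e: "e \<in> E"
    have "card {i. i < N \<and> e \<in> ps i} \<le> N"
      using card_mono[of "{..<N}" "{i. i < N \<and> e \<in> ps i}"] by auto
    then show "(\<Sum>i\<in>{i. i < N \<and> e \<in> ps i}. F e (load N w ps e)) \<le> real N * F e (load N w ps e)"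
      using F_nn[OF e] by (simp add: mult_right_mono)
  qed
  also have "\<dots> = real N * Copt" using ps(2) by (simp add: total_cost_def sum_distrib_left[symmetric])
  finally have "C p0 \<le> Np * rho * (real N * Copt)"
    using Np rho_ge by (simp add: mult_left_mono)
  also have "Np * rho * (real N * Copt) = rho * (Np * real N) * Copt" by simp
  also have "Np * real N = real N powr amax"
    unfolding Np_def using N by (simp add: powr_diff)
  finally show ?thesis .
qed

end


lemma geom_exp:
  fixes Q Z :: real
  assumes Q: "Q \<ge> 1" and Z: "Z \<ge> 1" and T: "real T \<ge> Q * ln Z"
  shows "(1 - 1 / Q) ^ T * Z \<le> 1"
proof -
  have r0: "0 \<le> 1 - 1 / Q" using Q by simp
  have "(1 - 1 / Q) ^ T \<le> exp (- (1 / Q)) ^ T"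
    by (rule power_mono[OF _ r0]) (use exp_ge_add_one_self[of "- (1 / Q)"] in simp)
  also have "\<dots> = exp (real T * (- (1 / Q)))" by (rule exp_of_nat_mult[symmetric])
  also have "\<dots> \<le> exp (- ln Z)"
  proof -
    have "ln Z \<le> real T / Q" using T Q by (simp add: le_divide_eq mult.commute)
    then show ?thesis by simp
  qed
  also have "\<dots> = 1 / Z" using Z by (simp add: exp_minus inverse_eq_divide)
  finally show ?thesis using Z by (simp add: le_divide_eq)
qed

lemma Hf_nn:
  assumes Vnn: "\<And>p. p \<in> S \<Longrightarrow> V p \<ge> 0"
    and stS: "\<And>p x. p \<in> S \<Longrightarrow> x < N \<Longrightarrow> st p x \<in> S"
  shows "p \<in> S \<Longrightarrow> set xs \<subseteq> {..<N} \<Longrightarrow> Hf st bad V p xs k \<ge> 0"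
proof (induction k arbitrary: p xs)
  case 0 then show ?case using Vnn by simp
next
  case (Suc k)
  then show ?case
  proof (cases xs)
    case (Cons x ys)
    then show ?thesis using Suc stS by auto
  qed simp
qed

context gnd begin

lemma lam_mu: "Copt > 0 \<Longrightarrow> lam + mu \<ge> 1"
proof -
  assume c: "Copt > 0"
  obtain ps where ps: "ps \<in> Prof" "C ps = Copt" by (rule opt_ex)
  have "(\<Sum>i<N. Ci i (ps(i := ps i))) \<le> lam * C ps + mu * C ps"
    using smooth ps(1) unfolding is_smooth_def by blast
  then have "1 * C ps \<le> (lam + mu) * C ps" using C_sum[OF ps(1)] by (simp add: algebra_simps)
  then show ?thesis using c ps(2) by (simp add: mult_le_cancel_right)
qed

lemma K_ge: "Copt > 0 \<Longrightarrow> K \<ge> rho"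
proof -
  assume c: "Copt > 0"
  have e2: "eps1\<^sup>2 \<ge> 1" using eps1_ge by (simp add: one_le_power)
  have "d \<le> 1 - mu" using re_ge mu_pos unfolding d_def by (simp add: mult_le_cancel_right1)
  also have "\<dots> \<le> lam" using lam_mu[OF c] by simp
  also have "\<dots> \<le> eps1\<^sup>2 * lam" using e2 lam_pos by simp
  finally have "rho * d \<le> rho * (eps1\<^sup>2 * lam)" using rho_ge by (simp add: mult_left_mono)
  then have "rho * d \<le> rho * eps1\<^sup>2 * lam" by (simp add: mult.assoc)
  then show ?thesis unfolding K_def using d_pos by (simp add: le_divide_eq)
qed

end

context gnd begin

lemma Copt_nn: "Copt \<ge> 0"
proof -
  obtain ps where ps: "ps \<in> Prof" "C ps = Copt" by (rule opt_ex)
  then show ?thesis using C_nn[OF ps(1)] by simp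
qed

lemma K_pos: "K > 0"
  unfolding K_def using d_pos lam_pos rho_ge eps1_ge by simp

lemma main:
  assumes Q_def: "Q = 2 * eps1 * real N * A / (1 - rho * eps1\<^sup>2 * mu)"
    and T_def: "T = nat \<lceil>Q * ln (A * B * real N powr Max (alpha ` {1..q}))\<rceil>"
    and T'_def: "T' = N * T\<^sup>2"
  shows "measure_pmf.prob (pmf_of_set (sel_seqs N T'))
           {xs. Min ((\<lambda>t. C (abrd_run st p0 xs t)) ` {0..T'})
                 \<le> 2 * rho * eps1\<^sup>2 * lam / (1 - rho * eps1\<^sup>2 * mu) * Copt} \<ge> 1 / 2"
proof -
  define S where "S = sel_seqs N T'"
  define X where "X = {xs. Min ((\<lambda>t. C (abrd_run st p0 xs t)) ` {0..T'})
                 \<le> 2 * rho * eps1\<^sup>2 * lam / (1 - rho * eps1\<^sup>2 * mu) * Copt}"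
  have tgt: "2 * rho * eps1\<^sup>2 * lam / (1 - rho * eps1\<^sup>2 * mu) = 2 * K"
    unfolding K_def d_def by simp
  have finS: "finite S" unfolding S_def by (rule finite_sel_seqs)
  have neS: "S \<noteq> {}" unfolding S_def using T'_def by (intro sel_seqs_ne) auto
  have prob: "measure_pmf.prob (pmf_of_set S) X = card (S \<inter> X) / card S"
    using finS neS by (simp add: measure_pmf_of_set)
  have cS: "card S > 0" using finS neS by (simp add: card_gt_0_iff)
  have minle: "Min ((\<lambda>t. C (abrd_run st p0 xs t)) ` {0..T'}) \<le> C (abrd_run st p0 xs t)"
    if "t \<le> T'" for xs t
    using that by (intro Min_le) auto
  show ?thesis
  proof (cases "C p0 \<le> 2 * K * Copt")
    case True
    have "xs \<in> X" for xs
    proof -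
      have "Min ((\<lambda>t. C (abrd_run st p0 xs t)) ` {0..T'}) \<le> C p0" using minle[of 0 xs] by simp
      then show ?thesis using True unfolding X_def tgt by simp
    qed
    then have "S \<inter> X = S" by auto
    then show ?thesis unfolding S_def[symmetric] X_def[symmetric] prob using cS by simp
  next
    case False
    then have bad0: "C p0 > 2 * K * Copt" by simp
    have N: "N > 0"
    proof (rule ccontr)
      assume "\<not> N > 0"
      then have "C p0 = 0" unfolding total_cost_def load_def by (simp add: gnd_cost_def)
      then show False using bad0 mult_nonneg_nonneg[OF less_imp_le[OF K_pos] Copt_nn] by simp
    qed
    have Cp0: "C p0 \<le> rho * real N powr amax * Copt" by (rule p0_bound[OF N])
    have Copt: "Copt > 0"
    proof (rule ccontr)
      assume "\<not> Copt > 0"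
      then have "Copt = 0" using Copt_nn by simp
      then show False using Cp0 bad0 by simp
    qed
    define bad where "bad = (\<lambda>p. C p > 2 * K * Copt)"
    define Bd where "Bd = {xs\<in>S. \<forall>t\<le>T. bad (abrd_run st p0 xs t)}"
    have TT': "T \<le> T'"
    proof -
      have "T \<le> T\<^sup>2" by (cases T) (auto simp: power2_eq_square)
      also have "\<dots> \<le> N * T\<^sup>2" using N by simp
      finally show ?thesis unfolding T'_def .
    qed
    have SX: "S - X \<subseteq> Bd"
    proof
      fix xs assume xs: "xs \<in> S - X"
      have "bad (abrd_run st p0 xs t)" if t: "t \<le> T" for t
      proof -
        have "t \<le> T'" using t TT' by simp
        note m = minle[OF this, of xs]
        have "\<not> Min ((\<lambda>t. C (abrd_run st p0 xs t)) ` {0..T'}) \<le> 2 * K * Copt"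
          using xs unfolding X_def tgt by simp
        then show ?thesis using m unfolding bad_def by linarith
      qed
      then show "xs \<in> Bd" using xs unfolding Bd_def by auto
    qed
    define Q' where "Q' = 2 * eps1 * real N * A / d"
    have QQ: "Q = Q'" unfolding Q_def Q'_def d_def ..
    have Q1: "Q \<ge> 1"
    proof -
      have "2 * eps1 * real N * A \<ge> 1 * 1 * 1 * 1" using eps1_ge N A_ge
        by (intro mult_mono) auto
      then have "2 * eps1 * real N * A \<ge> d" using d_le by linarith
      then show ?thesis unfolding QQ Q'_def using d_pos by (simp add: le_divide_eq)
    qed
    define r where "r = 1 - 1 / Q"
    have r0: "r \<ge> 0" unfolding r_def using Q1 by (simp add: divide_le_eq)
    have sumH: "(\<Sum>xs\<in>S. Hf st bad Phi p0 xs T) \<le> real N ^ T' * r ^ T * Phi p0"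
      unfolding S_def
    proof (rule Hf_sum[where S = Prof])
      show "\<And>p. p \<in> Prof \<Longrightarrow> 0 \<le> Phi p" using Phi_pos less_imp_le by blast
      show "\<And>p x. p \<in> Prof \<Longrightarrow> x < N \<Longrightarrow> st p x \<in> Prof" by (rule st_in)
      show "\<And>p. p \<in> Prof \<Longrightarrow> bad p \<Longrightarrow> (\<Sum>x<N. Phi (st p x)) \<le> real N * r * Phi p"
        unfolding r_def QQ Q'_def bad_def using drop_sum N by blast
    qed (use r0 p0_props(1) TT' in auto)
    have Hnn: "Hf st bad Phi p0 xs T \<ge> 0" if xs: "xs \<in> S" for xs
    proof (rule Hf_nn[where S = Prof and N = N])
      show "\<And>p. p \<in> Prof \<Longrightarrow> 0 \<le> Phi p" using Phi_pos less_imp_le by blast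
      show "\<And>p x. p \<in> Prof \<Longrightarrow> x < N \<Longrightarrow> st p x \<in> Prof" by (rule st_in)
      show "p0 \<in> Prof" by (rule p0_props(1))
      show "set xs \<subseteq> {..<N}" using xs unfolding S_def sel_seqs_def by simp
    qed
    have lowB: "B * Hf st bad Phi p0 xs T \<ge> 2 * K * Copt" if xs: "xs \<in> Bd" for xs
    proof -
      have xsS: "xs \<in> S" and allb: "\<forall>t\<le>T. bad (abrd_run st p0 xs t)" using xs unfolding Bd_def by auto
      have len: "length xs = T'" and set: "set xs \<subseteq> {..<N}" using xsS unfolding S_def sel_seqs_def by auto
      have H: "Hf st bad Phi p0 xs T = Phi (abrd_run st p0 xs T)"
        by (rule Hf_run) (use allb len TT' in auto)
      have inP: "abrd_run st p0 xs T \<in> Prof"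
        by (rule abrd_run_in[where S = Prof and N = N]) (use st_in p0_props(1) set len TT' in auto)
      have "2 * K * Copt < C (abrd_run st p0 xs T)" using allb unfolding bad_def by auto
      also have "\<dots> \<le> B * Phi (abrd_run st p0 xs T)" by (rule C_le[OF inP])
      finally show ?thesis unfolding H by simp
    qed
    have Z: "A * B * real N powr amax \<ge> 1"
    proof -
      have n1: "real N powr amax \<ge> 1" using N amax_gt by (simp add: ge_one_powr_ge_zero)
      have "A * B \<ge> 1 * 1" using A_ge B_ge by (intro mult_mono) auto
      then have "(A * B) * real N powr amax \<ge> 1 * 1" using n1 by (intro mult_mono) auto
      then show ?thesis by simp
    qed
    have rT: "r ^ T * (A * B * real N powr amax) \<le> 1" unfolding r_def
      by (rule geom_exp[OF Q1 Z]) (simp add: T_def amax_def real_nat_ceiling_ge)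
    have "real (card Bd) * (2 * K * Copt) = (\<Sum>xs\<in>Bd. 2 * K * Copt)" by simp
    also have "\<dots> \<le> (\<Sum>xs\<in>Bd. B * Hf st bad Phi p0 xs T)" by (rule sum_mono) (rule lowB)
    also have "\<dots> = B * (\<Sum>xs\<in>Bd. Hf st bad Phi p0 xs T)" by (simp add: sum_distrib_left)
    also have "\<dots> \<le> B * (\<Sum>xs\<in>S. Hf st bad Phi p0 xs T)"
      by (rule mult_left_mono, rule sum_mono2[OF finS]) (use Hnn B_ge in \<open>auto simp: Bd_def\<close>)
    also have "\<dots> \<le> B * (real N ^ T' * r ^ T * Phi p0)" using sumH B_ge by simp
    also have "\<dots> \<le> B * (real N ^ T' * r ^ T * (A * (rho * real N powr amax * Copt)))"
    proof (rule mult_left_mono, rule mult_left_mono)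
      have "Phi p0 \<le> A * C p0" by (rule Phi_le[OF p0_props(1)])
      also have "\<dots> \<le> A * (rho * real N powr amax * Copt)" using Cp0 A_ge by simp
      finally show "Phi p0 \<le> A * (rho * real N powr amax * Copt)" .
    qed (use r0 B_ge in simp_all)
    also have "\<dots> = (real N ^ T' * rho * Copt) * (r ^ T * (A * B * real N powr amax))"
      by (simp add: mult_ac)
    also have "\<dots> \<le> (real N ^ T' * rho * Copt) * 1"
      by (rule mult_left_mono[OF rT]) (use Copt rho_ge in simp)
    finally have "real (card Bd) * (2 * K) * Copt \<le> real N ^ T' * rho * Copt" by (simp add: mult_ac)
    then have "real (card Bd) * (2 * K) \<le> real N ^ T' * rho"
      using Copt by (simp add: mult_le_cancel_right)
    also have "\<dots> \<le> real N ^ T' * K" using K_ge[OF Copt] by (simp add: mult_left_mono)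
    finally have "real (card Bd) * 2 \<le> real N ^ T'" using K_pos by (simp add: mult.commute)
    then have cBd: "real (card Bd) * 2 \<le> real (card S)" unfolding S_def card_sel_seqs by simp
    have "card (S - X) \<le> card Bd"
      by (rule card_mono) (use SX finS in \<open>auto simp: Bd_def\<close>)
    moreover have "card (S \<inter> X) + card (S - X) = card S"
      using card_Int_Diff[OF finS, of X] by simp
    ultimately have "real (card (S \<inter> X)) * 2 \<ge> real (card S)" using cBd by linarith
    then show ?thesis unfolding S_def[symmetric] X_def[symmetric] prob using cS
      by (simp add: le_divide_eq)
  qed
qed

end

theorem theorem9p2:
  fixes E :: "'e set" and N :: nat and P :: "nat \<Rightarrow> 'e set set" and w :: "nat \<Rightarrow> 'e \<Rightarrow> nat"
    and q :: nat and alpha :: "nat \<Rightarrow> real" and sig :: "'e \<Rightarrow> real" and xi :: "'e \<Rightarrow> nat \<Rightarrow> real"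
    and rho :: real and orc :: "'e set set \<Rightarrow> ('e \<Rightarrow> real) \<Rightarrow> 'e set"
    and f :: "nat \<Rightarrow> 'e \<Rightarrow> (nat \<Rightarrow> 'e set) \<Rightarrow> real"
    and ft :: "nat \<Rightarrow> 'e \<Rightarrow> (nat \<Rightarrow> 'e set) \<Rightarrow> real"
    and BR :: "(nat \<Rightarrow> 'e set) \<Rightarrow> nat \<Rightarrow> 'e set"
    and Phi :: "(nat \<Rightarrow> 'e set) \<Rightarrow> real"
    and A B lam mu eps eps1 Q :: real and T T' :: nat
  assumes finE: "finite E"
    and P_sub: "\<forall>i<N. P i \<subseteq> Pow E \<and> P i \<noteq> {}"
    and w_pos: "\<forall>i<N. \<forall>e\<in>E. w i e \<ge> 1"
    and q_pos: "q \<ge> 1"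
    and alpha_gt: "\<forall>j\<in>{1..q}. alpha j > 1"
    and sigma_nn: "\<forall>e\<in>E. sig e \<ge> 0"
    and xi_nn: "\<forall>e\<in>E. \<forall>j\<in>{1..q}. xi e j \<ge> 0"
    and xi_pos: "\<forall>e\<in>E. \<exists>j\<in>{1..q}. xi e j > 0"
    and rho_ge: "rho \<ge> 1"
    and orc: "\<forall>i<N. reply_oracle_prop rho E (P i) (orc (P i))"
    and csm: "is_csm E N P w (gnd_cost q alpha sig xi) f"
    and pot: "is_potential E N P f Phi"
    and pot_bd: "bounded_potential E N P w (gnd_cost q alpha sig xi) Phi A B"
    and smooth: "is_smooth E N P w (gnd_cost q alpha sig xi) f lam mu"
    and eps: "0 < eps" "eps < 1"
    and eps1_def: "eps1 = (1 + eps) / (1 - eps)"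
    and mu_small: "mu < 1 / (rho * eps1\<^sup>2)"
    and ft_approx: "\<forall>p\<in>profiles N P. \<forall>i<N. \<forall>e\<in>E.
                      (1 - eps) * f i e p \<le> ft i e p \<and> ft i e p \<le> (1 + eps) * f i e p"
    and BR_spec: "\<forall>p\<in>profiles N P. \<forall>i<N. BR p i \<in> P i \<and>
                    (\<forall>r\<in>P i. indiv_cost E ft i (p(i := BR p i)) \<le> rho * indiv_cost E ft i (p(i := r)))"
    and Q_def: "Q = 2 * eps1 * real N * A / (1 - rho * eps1\<^sup>2 * mu)"
    and T_def: "T = nat \<lceil>Q * ln (A * B * real N powr Max (alpha ` {1..q}))\<rceil>"
    and T'_def: "T' = N * T\<^sup>2"
  shows "measure_pmf.prob (pmf_of_set (sel_seqs N T'))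
           {xs. Min ((\<lambda>t. total_cost E N w (gnd_cost q alpha sig xi)
                        (abrd_run (abrd_step N (indiv_cost E ft) BR eps1)
                                  (restrict (\<lambda>i. orc (P i) (\<lambda>e. gnd_cost q alpha sig xi e (w i e))) {..<N})
                                  xs t)) ` {0..T'})
                 \<le> 2 * rho * eps1\<^sup>2 * lam / (1 - rho * eps1\<^sup>2 * mu) * opt_cost E N P w (gnd_cost q alpha sig xi)}
         \<ge> 1 / 2"
proof -
  interpret gnd E N P w q alpha sig xi rho orc f ft BR Phi A B lam mu eps eps1
    by (rule gnd.intro) (rule assms)+
  show ?thesis using main[OF Q_def T_def T'_def] by (simp add: p0_def)
qed

end
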